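(* Let $p,n\in\mathbb N$ with $p\ge n\ge 10$, and let $G\in \mathrm{Ex}(p;T_n'')$. If $G$ is connected, then $\Delta(G)=n-5$.
   Context: All graphs are finite simple graphs; $\Delta(G)$ is the maximum degree of $G$. For a graph $L$, $\mathrm{ex}(p;L)$ is the maximum number of edges in a graph on $p$ vertices containing no subgraph isomorphic to $L$, and $\mathrm{Ex}(p;L)$ is the set of graphs on $p$ vertices containing no copy of $L$ and having exactly $\mathrm{ex}(p;L)$ edges. For $n\ge 6$, $T_n''$ is the tree on vertex set $\{v_0,\ldots,v_{n-1}\}$ with edge set $\{v_0v_1,\ldots,v_0v_{n-4},\ v_1v_{n-3},\ v_1v_{n-2},\ v_2v_{n-1}\}$. *)

theory Defs
  imports Main
begin

definition simple_graph :: "'a set \<Rightarrow> 'a set set \<Rightarrow> bool" where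
  "simple_graph V E \<longleftrightarrow> finite V \<and> (\<forall>e\<in>E. e \<subseteq> V \<and> card e = 2)"

definition contains_copy :: "'a set \<Rightarrow> 'a set set \<Rightarrow> 'b set \<Rightarrow> 'b set set \<Rightarrow> bool" where
  "contains_copy V E VL EL \<longleftrightarrow>
     (\<exists>f. inj_on f VL \<and> f ` VL \<subseteq> V \<and> (\<forall>e\<in>EL. f ` e \<in> E))"

definition ex_num :: "nat \<Rightarrow> 'b set \<Rightarrow> 'b set set \<Rightarrow> nat" where
  "ex_num p VL EL = Max {card E | E. simple_graph {0..<p} E \<and> \<not> contains_copy {0..<p} E VL EL}"

definition in_Ex :: "nat \<Rightarrow> 'b set \<Rightarrow> 'b set set \<Rightarrow> 'a set \<Rightarrow> 'a set set \<Rightarrow> bool" where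
  "in_Ex p VL EL V E \<longleftrightarrow> simple_graph V E \<and> card V = p \<and> \<not> contains_copy V E VL EL
      \<and> card E = ex_num p VL EL"

definition degree :: "'a set \<Rightarrow> 'a set set \<Rightarrow> 'a \<Rightarrow> nat" where
  "degree V E v = card {u\<in>V. {u, v} \<in> E}"

definition max_degree :: "'a set \<Rightarrow> 'a set set \<Rightarrow> nat" where
  "max_degree V E = Max (degree V E ` V)"

definition connected_graph :: "'a set \<Rightarrow> 'a set set \<Rightarrow> bool" where
  "connected_graph V E \<longleftrightarrow> V \<noteq> {} \<and>
     (\<forall>u\<in>V. \<forall>v\<in>V. (u, v) \<in> {(x, y). {x, y} \<in> E}\<^sup>*)"

text \<open>The tree T_n'' on vertices 0..n-1 (v_i = i).\<close>
definition Tpp_V :: "nat \<Rightarrow> nat set" where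
  "Tpp_V n = {0..<n}"

definition Tpp_E :: "nat \<Rightarrow> nat set set" where
  "Tpp_E n = {{0, i} | i. 1 \<le> i \<and> i \<le> n - 4} \<union> {{1, n - 3}, {1, n - 2}, {2, n - 1}}"

end

theory Submission
  imports Defs
begin


definition nb :: "'a set \<Rightarrow> 'a set set \<Rightarrow> 'a \<Rightarrow> 'a set" where
  "nb V E v = {u\<in>V. {u, v} \<in> E}"

lemma degree_nb: "degree V E v = card (nb V E v)"
  by (simp add: degree_def nb_def)

lemma transfer_ex:
  fixes V :: "'a set" and E2 :: "'a set set" and VL :: "'b set" and EL
  assumes sg: "simple_graph V E2" and cV: "card V = p"
    and nc: "\<not> contains_copy V E2 VL EL"
  shows "card E2 \<le> ex_num p VL EL"
proof -
  have fV: "finite V" using sg by (simp add: simple_graph_def)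
  obtain h where h: "bij_betw h V {0..<p}" using ex_bij_betw_finite_nat[OF fV] cV by auto
  have ih: "inj_on h V" using h by (simp add: bij_betw_def)
  define E3 where "E3 = (\<lambda>e. h ` e) ` E2"
  have sub: "\<And>e. e \<in> E2 \<Longrightarrow> e \<subseteq> V" using sg by (simp add: simple_graph_def)
  have c2: "\<And>e. e \<in> E2 \<Longrightarrow> card e = 2" using sg by (simp add: simple_graph_def)
  have sg3: "simple_graph {0..<p} E3"
    unfolding simple_graph_def E3_def
  proof (intro conjI ballI)
    fix e assume "e \<in> (\<lambda>e. h ` e) ` E2"
    then obtain e' where e': "e' \<in> E2" "e = h ` e'" by auto
    show "e \<subseteq> {0..<p}" using e' sub h by (auto simp: bij_betw_def)
    have "inj_on h e'" using ih sub[OF e'(1)] inj_on_subset by blast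
    then show "card e = 2" using e' c2 card_image by metis
  qed simp
  have injE: "inj_on (\<lambda>e. h ` e) E2"
  proof (rule inj_onI)
    fix a b assume ab: "a \<in> E2" "b \<in> E2" "h ` a = h ` b"
    have "a \<subseteq> V" "b \<subseteq> V" using ab sub by auto
    then show "a = b" using ab(3) ih by (metis inj_on_image_eq_iff)
  qed
  have cE3: "card E3 = card E2" unfolding E3_def using injE card_image by blast
  have nc3: "\<not> contains_copy {0..<p} E3 VL EL"
  proof
    assume "contains_copy {0..<p} E3 VL EL"
    then obtain f where f: "inj_on f VL" "f ` VL \<subseteq> {0..<p}" "\<forall>e\<in>EL. f ` e \<in> E3"
      unfolding contains_copy_def by auto
    define g where "g = inv_into V h"
    have hg: "bij_betw g {0..<p} V" using h g_def bij_betw_inv_into by blast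
    have "contains_copy V E2 VL EL"
      unfolding contains_copy_def
    proof (intro exI[of _ "g \<circ> f"] conjI ballI)
      show "inj_on (g \<circ> f) VL" using f(1,2) hg
        by (meson bij_betw_def comp_inj_on inj_on_subset)
      show "(g \<circ> f) ` VL \<subseteq> V" using f(2) hg by (auto simp: bij_betw_def)
      fix e assume "e \<in> EL"
      then have "f ` e \<in> E3" using f(3) by auto
      then obtain e' where e': "e' \<in> E2" "f ` e = h ` e'" unfolding E3_def by auto
      have "g ` (h ` e') = e'" using sub[OF e'(1)] g_def ih
        by (simp add: image_image inv_into_f_f subset_iff)
      then show "(g \<circ> f) ` e \<in> E2" using e' by (metis image_comp)
    qed
    then show False using nc by simp
  qed
  have fin: "finite {E. simple_graph {0..<p} E \<and> \<not> contains_copy {0..<p} E VL EL}"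
    by (rule finite_subset[of _ "Pow (Pow {0..<p})"]) (auto simp: simple_graph_def)
  have "card E3 \<le> ex_num p VL EL"
    unfolding ex_num_def
    by (rule Max_ge) (use fin sg3 nc3 in auto)
  then show ?thesis using cE3 by simp
qed

locale TF =
  fixes V :: "'a set" and E :: "'a set set" and n :: nat
  assumes sg: "simple_graph V E" and n10: "10 \<le> n"
    and nocopy: "\<not> contains_copy V E (Tpp_V n) (Tpp_E n)"
    and ext: "\<And>E2. simple_graph V E2 \<Longrightarrow> \<not> contains_copy V E2 (Tpp_V n) (Tpp_E n) \<Longrightarrow> card E2 \<le> card E"
    and bigV: "n \<le> card V"
begin

abbreviation N where "N \<equiv> nb V E"
abbreviation d where "d v \<equiv> card (N v)"

lemma finV: "finite V" using sg by (simp add: simple_graph_def)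
lemma Esub: "e \<in> E \<Longrightarrow> e \<subseteq> V" using sg by (simp add: simple_graph_def)
lemma Ecard: "e \<in> E \<Longrightarrow> card e = 2" using sg by (simp add: simple_graph_def)
lemma finE: "finite E"
  by (rule finite_subset[of _ "Pow V"]) (use Esub finV in auto)
lemma nb_sub: "N v \<subseteq> V" by (auto simp: nb_def)
lemma fin_nb[simp]: "finite (N v)" using finV nb_sub finite_subset by blast
lemma not_self: "v \<notin> N v"
  using Ecard by (fastforce simp: nb_def)
lemma nb_sym: "u \<in> N v \<Longrightarrow> v \<in> N u"
  using Esub by (auto simp: nb_def insert_commute)
lemma nbI: "{u, v} \<in> E \<Longrightarrow> u \<in> N v"
  using Esub by (auto simp: nb_def)
lemma nbD: "u \<in> N v \<Longrightarrow> {u, v} \<in> E \<and> u \<in> V"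
  by (auto simp: nb_def)
lemma nb_V: "u \<in> N v \<Longrightarrow> v \<in> V" using nb_sym nb_sub by blast

lemma emb:
  assumes h1: "v1 \<in> N v0" and h2: "v2 \<in> N v0" and h3: "a1 \<in> N v1" and h4: "a2 \<in> N v1"
    and h5: "b \<in> N v2" and dist: "distinct [v0, v1, v2, a1, a2, b]"
    and cL: "n - 6 \<le> card (N v0 - {v1, v2, a1, a2, b})"
  shows "contains_copy V E (Tpp_V n) (Tpp_E n)"
proof -
  define L where "L = N v0 - {v1, v2, a1, a2, b}"
  obtain L' where L': "L' \<subseteq> L" "card L' = n - 6" "finite L'"
    using cL L_def obtain_subset_with_card_n by metis
  obtain g where g: "bij_betw g {0..<n-6} L'" using ex_bij_betw_nat_finite[OF L'(3)] L'(2) by auto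
  define f where "f i = (if i = 0 then v0 else if i = 1 then v1 else if i = 2 then v2
     else if i = n - 3 then a1 else if i = n - 2 then a2 else if i = n - 1 then b else g (i - 3))" for i
  have nn: "10 \<le> n" using n10 .
  have fL: "f i \<in> L'" if "3 \<le> i" "i \<le> n - 4" for i
  proof -
    have ne: "i \<noteq> 0" "i \<noteq> 1" "i \<noteq> 2" "i \<noteq> n - 3" "i \<noteq> n - 2" "i \<noteq> n - 1"
      using that nn by auto
    have "f i = g (i - 3)" unfolding f_def by (simp only: ne if_False)
    moreover have "i - 3 \<in> {0..<n-6}" using that nn by auto
    ultimately show ?thesis using g by (auto simp: bij_betw_def)
  qed
  have f0: "f 0 = v0" "f 1 = v1" "f 2 = v2" "f (n-3) = a1" "f (n-2) = a2" "f (n-1) = b"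
    using nn by (auto simp: f_def)
  have L'N: "L' \<subseteq> N v0" using L' L_def by auto
  have spnot: "x \<notin> L'" if "x \<in> {v0, v1, v2, a1, a2, b}" for x
    using that L' L_def not_self by auto
  have inj: "inj_on f {0..<n}"
  proof (rule inj_onI)
    fix i j assume i: "i \<in> {0..<n}" and j: "j \<in> {0..<n}" and eq: "f i = f j"
    consider "i \<in> {0, 1, 2, n-3, n-2, n-1}" | "3 \<le> i \<and> i \<le> n - 4" using i nn by force
    then show "i = j"
    proof cases
      case 1
      note isp = 1
      then have fi: "f i \<in> {v0, v1, v2, a1, a2, b}" using f0 by auto
      consider "j \<in> {0, 1, 2, n-3, n-2, n-1}" | "3 \<le> j \<and> j \<le> n - 4" using j nn by force
      then show ?thesis
      proof cases
        case 1
        with isp eq dist nn f0 show ?thesis by auto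
      next
        case 2 then have "f j \<in> L'" using fL by auto
        then show ?thesis using spnot fi eq by auto
      qed
    next
      case 2
      then have fi: "f i \<in> L'" using fL by auto
      consider "j \<in> {0, 1, 2, n-3, n-2, n-1}" | "3 \<le> j \<and> j \<le> n - 4" using j nn by force
      then show ?thesis
      proof cases
        case 1
        then have "f j \<in> {v0, v1, v2, a1, a2, b}" using f0 by auto
        then show ?thesis using spnot fi eq by auto
      next
        case 3: 2
        have "i - 3 \<in> {0..<n-6}" "j - 3 \<in> {0..<n-6}" using 2 3 nn by auto
        moreover have "g (i - 3) = g (j - 3)"
        proof -
          have ne: "i \<noteq> 0" "i \<noteq> 1" "i \<noteq> 2" "i \<noteq> n - 3" "i \<noteq> n - 2" "i \<noteq> n - 1"
                "j \<noteq> 0" "j \<noteq> 1" "j \<noteq> 2" "j \<noteq> n - 3" "j \<noteq> n - 2" "j \<noteq> n - 1"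
            using 2 3 nn by auto
          show ?thesis using eq unfolding f_def by (simp only: ne if_False)
        qed
        ultimately have "i - 3 = j - 3" using g by (auto simp: bij_betw_def inj_on_def)
        then show ?thesis using 2 3 by arith
      qed
    qed
  qed
  have inV: "f ` {0..<n} \<subseteq> V"
  proof
    fix y assume "y \<in> f ` {0..<n}"
    then obtain i where i: "i < n" "y = f i" by auto
    have vs: "v0 \<in> V" "v1 \<in> V" "v2 \<in> V" "a1 \<in> V" "a2 \<in> V" "b \<in> V"
      using h1 h2 h3 h4 h5 nb_sub nb_V by auto
    consider "i \<in> {0, 1, 2, n-3, n-2, n-1}" | "3 \<le> i \<and> i \<le> n - 4" using i nn by force
    then show "y \<in> V"
    proof cases
      case 1 then show ?thesis using vs i f0 by auto
    next
      case 2 then show ?thesis using fL i L'N nb_sub by blast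
    qed
  qed
  have edges: "f ` e \<in> E" if te: "e \<in> Tpp_E n" for e
  proof -
    have ed: "{x, y} \<in> E" if "x \<in> N y" for x y using that nbD by auto
    consider i where "e = {0, i}" "1 \<le> i" "i \<le> n - 4" | "e = {1, n-3}" | "e = {1, n-2}" | "e = {2, n-1}"
      using te unfolding Tpp_E_def by blast
    then show ?thesis
    proof cases
      case (1 i)
      have "f i \<in> N v0"
      proof (cases "i = 1 \<or> i = 2")
        case True then show ?thesis using h1 h2 f0 by auto
      next
        case False then show ?thesis using fL[of i] 1 L'N by auto
      qed
      then have "{f i, v0} \<in> E" using ed by blast
      then show ?thesis using 1 f0 by (simp add: insert_commute)
    next
      case 2 then show ?thesis using f0 h3 ed by (simp add: insert_commute)
    next
      case 3 then show ?thesis using f0 h4 ed by (simp add: insert_commute)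
    next
      case 4 then show ?thesis using f0 h5 ed by (simp add: insert_commute)
    qed
  qed
  show ?thesis unfolding contains_copy_def Tpp_V_def
    using inj inV edges by blast
qed





lemma card_filter_sum: assumes "finite A" shows "card {x\<in>A. P x} = (\<Sum>x\<in>A. if P x then 1 else 0::nat)"
proof -
  have "card {x\<in>A. P x} = (\<Sum>x\<in>{x\<in>A. P x}. 1::nat)" by simp
  also have "\<dots> = (\<Sum>x\<in>A. if P x then 1 else 0::nat)" by (rule sum.inter_filter[OF assms])
  finally show ?thesis .
qed

lemma dbl_inj: "inj_on (\<lambda>u. {u, v}) A"
  by (rule inj_onI) (auto simp: doubleton_eq_iff)

lemma edge_other: assumes "e \<in> E" "v \<in> e" obtains u where "e = {u, v}" "u \<noteq> v"
proof -
  have "card e = 2" using Ecard assms by blast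
  then obtain a b where ab: "e = {a, b}" "a \<noteq> b" unfolding card_2_iff by blast
  show ?thesis
  proof (cases "v = a")
    case True then show ?thesis using that[of b] ab by (simp add: insert_commute)
  next
    case False then have "v = b" using ab assms by auto
    then show ?thesis using that[of a] ab by simp
  qed
qed

lemma d_edges: "d v = card {e\<in>E. v \<in> e}"
proof -
  have "(\<lambda>u. {u, v}) ` N v = {e\<in>E. v \<in> e}"
  proof (rule set_eqI, rule iffI)
    fix e assume "e \<in> (\<lambda>u. {u, v}) ` N v" then show "e \<in> {e\<in>E. v \<in> e}" using nbD by auto
  next
    fix e assume e: "e \<in> {e\<in>E. v \<in> e}"
    then obtain u where u: "e = {u, v}" using edge_other by blast
    then have "u \<in> N v" using e nbI by auto
    then show "e \<in> (\<lambda>u. {u, v}) ` N v" using u by blast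
  qed
  moreover have "card ((\<lambda>u. {u, v}) ` N v) = card (N v)" by (rule card_image, rule dbl_inj)
  ultimately show ?thesis by simp
qed

lemma out_edges: assumes "v \<in> S" shows "card (N v - S) = card {e\<in>E. v \<in> e \<and> \<not> e \<subseteq> S}"
proof -
  have "(\<lambda>u. {u, v}) ` (N v - S) = {e\<in>E. v \<in> e \<and> \<not> e \<subseteq> S}"
  proof (rule set_eqI, rule iffI)
    fix e assume "e \<in> (\<lambda>u. {u, v}) ` (N v - S)" then show "e \<in> {e\<in>E. v \<in> e \<and> \<not> e \<subseteq> S}" using nbD by auto
  next
    fix e assume e: "e \<in> {e\<in>E. v \<in> e \<and> \<not> e \<subseteq> S}"
    then obtain u where u: "e = {u, v}" using edge_other by blast
    then have "u \<notin> S" using e assms by auto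
    then have "u \<in> N v - S" using e nbI u by auto
    then show "e \<in> (\<lambda>u. {u, v}) ` (N v - S)" using u by blast
  qed
  moreover have "card ((\<lambda>u. {u, v}) ` (N v - S)) = card (N v - S)" by (rule card_image, rule dbl_inj)
  ultimately show ?thesis by simp
qed

lemma edge_term: assumes "e \<in> E" and fS: "finite S"
  shows "(\<Sum>v\<in>S. (if v \<in> e then 1 else 0) + (if v \<in> e \<and> \<not> e \<subseteq> S then 1 else 0::nat))
        = (if e \<inter> S \<noteq> {} then 2 else 0)"
proof -
  obtain a b where ab: "e = {a, b}" "a \<noteq> b" using Ecard[OF assms(1)] unfolding card_2_iff by blast
  have "(\<Sum>v\<in>S. (if v \<in> e then 1 else 0) + (if v \<in> e \<and> \<not> e \<subseteq> S then 1 else 0::nat))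
        = card {v\<in>S. v \<in> e} + card {v\<in>S. v \<in> e \<and> \<not> e \<subseteq> S}"
    by (simp only: card_filter_sum[OF fS] sum.distrib)
  also have "\<dots> = (if e \<inter> S \<noteq> {} then 2 else 0)"
  proof -
    have s1: "{v\<in>S. v \<in> e} = S \<inter> {a, b}" using ab by auto
    consider "a \<in> S" "b \<in> S" | "a \<in> S" "b \<notin> S" | "a \<notin> S" "b \<in> S" | "a \<notin> S" "b \<notin> S" by blast
    then show ?thesis
    proof cases
      case 1
      then have "{v\<in>S. v \<in> e \<and> \<not> e \<subseteq> S} = {}" "S \<inter> {a,b} = {a,b}" "e \<inter> S \<noteq> {}" using ab by auto
      then show ?thesis using s1 ab by simp
    next
      case 2
      then have "{v\<in>S. v \<in> e \<and> \<not> e \<subseteq> S} = {a}" "S \<inter> {a,b} = {a}" "e \<inter> S \<noteq> {}" using ab by auto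
      then show ?thesis using s1 by simp
    next
      case 3
      then have "{v\<in>S. v \<in> e \<and> \<not> e \<subseteq> S} = {b}" "S \<inter> {a,b} = {b}" "e \<inter> S \<noteq> {}" using ab by auto
      then show ?thesis using s1 by simp
    next
      case 4
      then have "{v\<in>S. v \<in> e \<and> \<not> e \<subseteq> S} = {}" "{v\<in>S. v \<in> e} = {}" "e \<inter> S = {}" using ab by auto
      then show ?thesis by (simp only: card.empty) simp
    qed
  qed
  finally show ?thesis .
qed

lemma touch_count:
  assumes SV: "S \<subseteq> V"
  shows "2 * card {e\<in>E. e \<inter> S \<noteq> {}} = (\<Sum>v\<in>S. d v + card (N v - S))"
proof -
  have fS: "finite S" using SV finV finite_subset by blast
  have "(\<Sum>v\<in>S. d v + card (N v - S))
      = (\<Sum>v\<in>S. \<Sum>e\<in>E. (if v \<in> e then 1 else 0) + (if v \<in> e \<and> \<not> e \<subseteq> S then 1 else 0::nat))"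
  proof (rule sum.cong[OF refl])
    fix v assume v: "v \<in> S"
    show "d v + card (N v - S) = (\<Sum>e\<in>E. (if v \<in> e then 1 else 0) + (if v \<in> e \<and> \<not> e \<subseteq> S then 1 else 0::nat))"
      unfolding d_edges out_edges[OF v] card_filter_sum[OF finE] sum.distrib ..
  qed
  also have "\<dots> = (\<Sum>e\<in>E. \<Sum>v\<in>S. (if v \<in> e then 1 else 0) + (if v \<in> e \<and> \<not> e \<subseteq> S then 1 else 0::nat))"
    by (rule sum.swap)
  also have "\<dots> = (\<Sum>e\<in>E. if e \<inter> S \<noteq> {} then 2 else 0)"
    by (rule sum.cong[OF refl]) (rule edge_term[OF _ fS])
  also have "\<dots> = (\<Sum>e\<in>E. 2 * (if e \<inter> S \<noteq> {} then 1 else 0))"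
    by (rule sum.cong[OF refl]) simp
  also have "\<dots> = 2 * card {e\<in>E. e \<inter> S \<noteq> {}}"
    unfolding card_filter_sum[OF finE] sum_distrib_left ..
  finally show ?thesis by simp
qed

lemma Tpp_mem:
  "1 \<le> i \<Longrightarrow> i \<le> n - 4 \<Longrightarrow> {0, i} \<in> Tpp_E n"
  "{1, n-3} \<in> Tpp_E n" "{1, n-2} \<in> Tpp_E n" "{2, n-1} \<in> Tpp_E n"
  unfolding Tpp_E_def by blast+

lemma Tpp_sub: "e \<in> Tpp_E n \<Longrightarrow> e \<subseteq> {0..<n}"
  using n10 unfolding Tpp_E_def by auto

lemma surgery:
  assumes SV: "S \<subseteq> V" and cS: "card S \<le> n - 1"
    and crit: "(\<Sum>v\<in>S. d v + card (N v - S)) < card S * (card S - 1)"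
  shows False
proof -
  have fS: "finite S" using SV finV finite_subset by blast
  define Out where "Out = {e\<in>E. e \<inter> S = {}}"
  define Pr where "Pr = {B. B \<subseteq> S \<and> card B = 2}"
  define Tc where "Tc = {e\<in>E. e \<inter> S \<noteq> {}}"
  define E2 where "E2 = Out \<union> Pr"
  have sg2: "simple_graph V E2"
    unfolding simple_graph_def E2_def Out_def Pr_def using finV Esub Ecard SV by auto
  have PrS: "B \<in> Pr \<Longrightarrow> B \<inter> S \<noteq> {}" for B
  proof -
    assume "B \<in> Pr" then have "B \<subseteq> S" "card B = 2" by (auto simp: Pr_def)
    then have "B \<noteq> {}" by auto
    then show ?thesis using \<open>B \<subseteq> S\<close> by blast
  qed
  have disj: "Out \<inter> Pr = {}" using PrS by (auto simp: Out_def)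
  have finOut: "finite Out" using finE by (simp add: Out_def)
  have finPr: "finite Pr" by (rule finite_subset[of _ "Pow S"]) (use fS in \<open>auto simp: Pr_def\<close>)
  have cE2: "card E2 = card Out + card Pr" unfolding E2_def by (rule card_Un_disjoint[OF finOut finPr disj])
  have cPr: "card Pr = card S choose 2" unfolding Pr_def by (rule n_subsets[OF fS])
  have EU: "E = Out \<union> Tc" "Out \<inter> Tc = {}" by (auto simp: Out_def Tc_def)
  have cE: "card E = card Out + card Tc"
    using EU card_Un_disjoint[OF finOut, of Tc] finE by (simp add: Tc_def)
  have "2 * card Tc < card S * (card S - 1)" using touch_count[OF SV] crit by (simp add: Tc_def)
  moreover have "card S * (card S - 1) = 2 * (card S choose 2)"
  proof -
    have "even (card S * (card S - 1))" by (cases "even (card S)") auto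
    then show ?thesis by (simp add: choose_two)
  qed
  ultimately have "card Tc < card Pr" using cPr by simp
  then have lt: "card E < card E2" using cE cE2 by simp
  have nc2: "\<not> contains_copy V E2 (Tpp_V n) (Tpp_E n)"
  proof
    assume "contains_copy V E2 (Tpp_V n) (Tpp_E n)"
    then obtain f where f: "inj_on f {0..<n}" "f ` {0..<n} \<subseteq> V" "\<forall>e\<in>Tpp_E n. f ` e \<in> E2"
      unfolding contains_copy_def Tpp_V_def by auto
    have side: "(f i \<in> S) = (f j \<in> S)" if "{i, j} \<in> Tpp_E n" for i j
    proof -
      have "{f i, f j} \<in> E2" using f(3) that by auto
      then show ?thesis unfolding E2_def Out_def Pr_def by auto
    qed
    have nn: "10 \<le> n" using n10 .
    have all: "(f i \<in> S) = (f 0 \<in> S)" if iN: "i < n" for i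
    proof -
      consider "i = 0" | "1 \<le> i \<and> i \<le> n - 4" | "i = n - 3" | "i = n - 2" | "i = n - 1" using iN by linarith
      then show ?thesis
      proof cases
        case 1 then show ?thesis by simp
      next
        case 2 then show ?thesis using side[OF Tpp_mem(1)] by auto
      next
        case 3 then show ?thesis using side[OF Tpp_mem(2)] side[OF Tpp_mem(1)[of 1]] nn by auto
      next
        case 4 then show ?thesis using side[OF Tpp_mem(3)] side[OF Tpp_mem(1)[of 1]] nn by auto
      next
        case 5 then show ?thesis using side[OF Tpp_mem(4)] side[OF Tpp_mem(1)[of 2]] nn by auto
      qed
    qed
    show False
    proof (cases "f 0 \<in> S")
      case True
      then have "f ` {0..<n} \<subseteq> S" using all by auto
      then have "card (f ` {0..<n}) \<le> card S" using card_mono fS by blast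
      moreover have "card (f ` {0..<n}) = n" using card_image[OF f(1)] by simp
      ultimately show False using cS nn by linarith
    next
      case False
      have "contains_copy V E (Tpp_V n) (Tpp_E n)"
        unfolding contains_copy_def Tpp_V_def
      proof (intro exI[of _ f] conjI ballI)
        show "inj_on f {0..<n}" "f ` {0..<n} \<subseteq> V" using f by auto
        fix e assume e: "e \<in> Tpp_E n"
        have "f ` e \<inter> S = {}" using Tpp_sub[OF e] all False by auto
        moreover have "f ` e \<in> E2" using f(3) e by auto
        ultimately show "f ` e \<in> E" using PrS unfolding E2_def Out_def by auto
      qed
      then show False using nocopy by simp
    qed
  qed
  show False using ext[OF sg2 nc2] lt by simp
qed

lemma card_diff_ge: "finite A \<Longrightarrow> A \<inter> B \<subseteq> C \<Longrightarrow> finite C \<Longrightarrow> card A \<le> card (A - B) + card C"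
  by (metis card_Int_Diff card_mono add.commute add_le_mono1 finite_Int)

lemma conn_edge:
  assumes conn: "connected_graph V E" and xV: "x \<in> V" and yV: "y \<in> V" and yW: "y \<notin> insert x (N x)"
  shows "\<exists>u\<in>N x. \<exists>w\<in>N u. w \<notin> insert x (N x)"
proof (rule ccontr)
  assume no: "\<not> ?thesis"
  have "(x, y) \<in> {(a, b). {a, b} \<in> E}\<^sup>*" using conn xV yV by (simp add: connected_graph_def)
  then have "y \<in> insert x (N x)"
  proof (induction rule: rtrancl_induct)
    case base then show ?case by simp
  next
    case (step z z')
    then have ed: "{z, z'} \<in> E" by simp
    show ?case
    proof (cases "z = x")
      case True then have "z' \<in> N x" using ed nbI[of z' x] by (simp add: insert_commute)
      then show ?thesis by simp
    next
      case False then have zN: "z \<in> N x" using step by simp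
      have "z' \<in> N z" using ed nbI[of z' z] by (simp add: insert_commute)
      then show ?thesis using no zN by blast
    qed
  qed
  then show False using yW by simp
qed

lemma low_deg: assumes all: "\<forall>w\<in>V. d w \<le> n - 6" shows False
proof -
  have nn: "10 \<le> n" using n10 .
  obtain u where uV: "u \<in> V" using bigV nn by fastforce
  have "card (insert u (N u)) \<le> Suc (d u)" by (simp add: card_insert_if)
  then have "card (insert u (N u)) \<le> n - 5" using all uV nn by fastforce
  moreover have "insert u (N u) \<subseteq> V" using uV nb_sub by auto
  ultimately have "insert u (N u) \<noteq> V" using bigV nn by auto
  then obtain v where vV: "v \<in> V" and vn: "v \<notin> insert u (N u)" using \<open>insert u (N u) \<subseteq> V\<close> by blast
  define E2 where "E2 = insert {u, v} E"
  have uv: "u \<noteq> v" using vn by auto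
  have sg2: "simple_graph V E2" using sg uV vV uv by (auto simp: E2_def simple_graph_def)
  have notin: "{u, v} \<notin> E" using vn nbI[of v u] by (auto simp: insert_commute)
  have cE2: "card E2 = Suc (card E)" using notin finE by (simp add: E2_def)
  have nbE2: "card (nb V E2 w) \<le> n - 5" if wV: "w \<in> V" for w
  proof -
    have c1: "nb V E2 w \<subseteq> N w \<union> (if w = u then {v} else if w = v then {u} else {})"
      by (auto simp: E2_def nb_def doubleton_eq_iff)
    have "card (N w \<union> (if w = u then {v} else if w = v then {u} else {})) \<le> card (N w) + 1"
      by (auto simp: card_insert_if)
    moreover have "finite (N w \<union> (if w = u then {v} else if w = v then {u} else {}))" by auto
    ultimately have "card (nb V E2 w) \<le> card (N w) + 1" using card_mono[OF _ c1] by fastforce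
    then show ?thesis using all wV nn by fastforce
  qed
  have nc2: "\<not> contains_copy V E2 (Tpp_V n) (Tpp_E n)"
  proof
    assume "contains_copy V E2 (Tpp_V n) (Tpp_E n)"
    then obtain f where f: "inj_on f {0..<n}" "f ` {0..<n} \<subseteq> V" "\<forall>e\<in>Tpp_E n. f ` e \<in> E2"
      unfolding contains_copy_def Tpp_V_def by auto
    have sub: "f ` {1..n-4} \<subseteq> nb V E2 (f 0)"
    proof
      fix y assume "y \<in> f ` {1..n-4}"
      then obtain i where i: "1 \<le> i" "i \<le> n - 4" "y = f i" by auto
      have "f ` {0, i} \<in> E2" using f(3) Tpp_mem(1)[OF i(1,2)] by blast
      moreover have "f i \<in> V" using f(2) i nn by auto
      ultimately show "y \<in> nb V E2 (f 0)" using i by (auto simp: nb_def insert_commute)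
    qed
    have "card (f ` {1..n-4}) = n - 4"
    proof -
      have "{1..n-4} \<subseteq> {0..<n}" using nn by auto
      then have "inj_on f {1..n-4}" using f(1) inj_on_subset by blast
      then show ?thesis using card_image by fastforce
    qed
    moreover have "finite (nb V E2 (f 0))" using finV by (simp add: nb_def)
    ultimately have "n - 4 \<le> card (nb V E2 (f 0))" using card_mono[OF _ sub] by metis
    moreover have "f 0 \<in> V" using f(2) nn by auto
    ultimately show False using nbE2 nn by fastforce
  qed
  show False using ext[OF sg2 nc2] cE2 by simp
qed


end




lemma card_ins_le: "card (insert a A) \<le> Suc (card A)"
  by (cases "finite A") (auto simp: card_insert_if)
lemma card2le: "card {a, b} \<le> 2" using card_ins_le[of a "{b}"] by simp
lemma card3le: "card {a, b, c} \<le> 3" using card_ins_le[of a "{b,c}"] card2le[of b c] by simp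
lemma card4le: "card {a, b, c, e} \<le> 4" using card_ins_le[of a "{b,c,e}"] card3le[of b c e] by simp
lemma card5le: "card {a, b, c, e, f} \<le> 5" using card_ins_le[of a "{b,c,e,f}"] card4le[of b c e f] by simp

lemma two_elems: assumes "2 \<le> card A" obtains a b where "a \<in> A" "b \<in> A" "a \<noteq> b"
proof -
  obtain B where "B \<subseteq> A" "card B = 2" using obtain_subset_with_card_n[OF assms] by metis
  then show ?thesis using that unfolding card_2_iff by blast
qed

lemma three_elems: assumes "3 \<le> card A" obtains a b c where "a \<in> A" "b \<in> A" "c \<in> A" "a \<noteq> b" "a \<noteq> c" "b \<noteq> c"
proof -
  obtain B where B: "B \<subseteq> A" "card B = 3" "finite B" using obtain_subset_with_card_n[OF assms] by metis
  then obtain a where a: "a \<in> B" by fastforce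
  then have "card (B - {a}) = 2" using B by simp
  then obtain b c where "B - {a} = {b, c}" "b \<noteq> c" unfolding card_2_iff by blast
  then show ?thesis using that a B by blast
qed

lemma card_sub_le: "finite B \<Longrightarrow> A \<subseteq> B \<Longrightarrow> card B \<le> k \<Longrightarrow> card A \<le> k"
  using card_mono order.trans by blast

lemma sum_split_bound:
  fixes f :: "'a \<Rightarrow> nat"
  assumes u: "u0 \<in> A" and fA: "finite A" and b: "\<And>v. v \<in> A - {u0} \<Longrightarrow> f v \<le> K"
  shows "sum f A \<le> f u0 + (card A - 1) * K"
proof -
  have "sum f A = f u0 + sum f (A - {u0})" by (rule sum.remove[OF fA u])
  moreover have "sum f (A - {u0}) \<le> card (A - {u0}) * K" using sum_bounded_above[of "A - {u0}" f K] b by simp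
  moreover have "card (A - {u0}) = card A - 1" using u fA by simp
  ultimately show ?thesis by simp
qed

context TF begin

lemma phi_le: "d v + card (N v - S) \<le> 2 * d v"
proof -
  have "card (N v - S) \<le> d v" by (rule card_mono) auto
  then show ?thesis by linarith
qed

lemma fc:
  assumes "v1 \<in> N v0" "v2 \<in> N v0" "a1 \<in> N v1" "a2 \<in> N v1" "b \<in> N v2"
    and "distinct [v0, v1, v2, a1, a2, b]" and "N v0 \<inter> {v1, v2, a1, a2, b} \<subseteq> C" and "finite C"
    and "n - 6 + card C \<le> d v0"
  shows False
proof -
  have "d v0 \<le> card (N v0 - {v1, v2, a1, a2, b}) + card C"
    by (rule card_diff_ge) (use assms in auto)
  then have "n - 6 \<le> card (N v0 - {v1, v2, a1, a2, b})" using assms(9) by linarith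
  then have "contains_copy V E (Tpp_V n) (Tpp_E n)" using emb assms(1-6) by blast
  then show False using nocopy by simp
qed

abbreviation phi where "phi S v \<equiv> d v + card (N v - S)"

lemma sum_S:
  assumes xV: "x \<in> V"
  shows "(\<Sum>v\<in>insert x (N x). phi S v) = phi S x + (\<Sum>v\<in>N x. phi S v)"
  using not_self[of x] by (simp add: sum.insert)

lemma caseD2:
  assumes xV: "x \<in> V" and mx: "\<forall>v\<in>V. d v \<le> d x" and D: "d x = n - 2"
    and u0: "u0 \<in> N x" and w: "w \<in> N u0" and wW: "w \<notin> insert x (N x)"
  shows False
proof -
  have nn: "10 \<le> n" using n10 .
  define S where "S = insert x (N x)"
  have SV: "S \<subseteq> V" using xV nb_sub by (auto simp: S_def)
  have cS: "card S = d x + 1" using not_self[of x] by (simp add: S_def)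
  have key: "card (N v - {x, u0, w}) \<le> 1" if v: "v \<in> N x" "v \<noteq> u0" for v
  proof (rule ccontr)
    assume "\<not> ?thesis"
    then have "2 \<le> card (N v - {x, u0, w})" by simp
    then obtain a1 a2 where a: "a1 \<in> N v - {x, u0, w}" "a2 \<in> N v - {x, u0, w}" "a1 \<noteq> a2"
      by (rule two_elems)
    have "card (N x) \<le> card (N x - {v, u0, a1, a2, w}) + card {v, u0, a1, a2}"
      by (rule card_diff_ge) (use wW in auto)
    then have cL: "n - 6 \<le> card (N x - {v, u0, a1, a2, w})" using card4le[of v u0 a1 a2] D nn by linarith
    have "distinct [x, v, u0, a1, a2, w]"
      using a v u0 wW w not_self[of x] not_self[of v] not_self[of u0] by auto
    then have "contains_copy V E (Tpp_V n) (Tpp_E n)"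
      using emb[OF v(1) u0 _ _ w _ cL] a by blast
    then show False using nocopy by simp
  qed
  have phi_v: "phi S v \<le> 6" if v: "v \<in> N x - {u0}" for v
  proof -
    have k: "card (N v - {x, u0, w}) \<le> 1" using key v by auto
    have "N v \<subseteq> {x, u0, w} \<union> (N v - {x, u0, w})" by auto
    moreover have "card ({x, u0, w} \<union> (N v - {x, u0, w})) \<le> 4"
      using card_Un_le[of "{x, u0, w}" "N v - {x, u0, w}"] card3le[of x u0 w] k by linarith
    ultimately have "d v \<le> 4" using card_mono[of "{x, u0, w} \<union> (N v - {x, u0, w})" "N v"] by (meson card_sub_le finite_UnI fin_nb finite_Diff finite.insertI finite.emptyI)
    have "N v - S \<subseteq> {w} \<union> (N v - {x, u0, w})" using u0 by (auto simp: S_def)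
    moreover have "card ({w} \<union> (N v - {x, u0, w})) \<le> 2"
      using card_Un_le[of "{w}" "N v - {x, u0, w}"] k by simp
    ultimately have "card (N v - S) \<le> 2"
      using card_sub_le[of "{w} \<union> (N v - {x, u0, w})" "N v - S"] by simp
    then show ?thesis using \<open>d v \<le> 4\<close> by linarith
  qed
  have phi_u0: "phi S u0 \<le> 2 * d x - 1"
  proof -
    have "x \<in> N u0" using nb_sym[OF u0] .
    have "N u0 - S \<subseteq> N u0 - {x}" by (auto simp: S_def)
    then have "card (N u0 - S) \<le> card (N u0 - {x})" by (rule card_mono[rotated]) simp
    also have "\<dots> = d u0 - 1" using \<open>x \<in> N u0\<close> by simp
    finally have "card (N u0 - S) \<le> d u0 - 1" .
    moreover have "d u0 \<le> d x" using mx u0 nb_sub by auto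
    moreover have "d u0 \<ge> 1"
    proof -
      have "N u0 \<noteq> {}" using \<open>x \<in> N u0\<close> by blast
      then show ?thesis using fin_nb[of u0] card_gt_0_iff by (metis One_nat_def Suc_leI)
    qed
    ultimately show ?thesis by linarith
  qed
  have phi_x: "phi S x = d x" unfolding S_def by (simp add: Diff_eq_empty_iff[THEN iffD2, OF subset_insertI])
  have s1: "(\<Sum>v\<in>S. phi S v) = phi S x + (\<Sum>v\<in>N x. phi S v)"
    unfolding S_def by (rule sum_S[OF xV])
  have s2: "(\<Sum>v\<in>N x. phi S v) = phi S u0 + (\<Sum>v\<in>N x - {u0}. phi S v)"
    by (rule sum.remove[OF fin_nb u0])
  have "(\<Sum>v\<in>S. phi S v) = phi S x + phi S u0 + (\<Sum>v\<in>N x - {u0}. phi S v)"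
    unfolding s1 s2 by simp
  also have "(\<Sum>v\<in>N x - {u0}. phi S v) \<le> card (N x - {u0}) * 6"
    using sum_bounded_above[of "N x - {u0}" "phi S" 6] phi_v by simp
  finally have "(\<Sum>v\<in>S. phi S v) \<le> d x + (2 * d x - 1) + (d x - 1) * 6"
    using phi_x phi_u0 u0 by simp
  moreover have "d x + (2 * d x - 1) + (d x - 1) * 6 < (d x + 1) * d x"
  proof -
    have "8 \<le> d x" using D nn by simp
    then have "8 * d x \<le> d x * d x" by simp
    moreover have "(d x + 1) * d x = d x * d x + d x" by (simp add: algebra_simps)
    ultimately show ?thesis using \<open>8 \<le> d x\<close> by linarith
  qed
  ultimately have "(\<Sum>v\<in>S. phi S v) < card S * (card S - 1)" using cS by simp
  moreover have "card S \<le> n - 1" using cS D nn by simp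
  ultimately show False using surgery[OF SV] by blast
qed

lemma phi_x_Nx: "phi (insert x (N x) \<union> T) x = d x"
proof -
  have "N x - (insert x (N x) \<union> T) = {}" by auto
  then show ?thesis by simp
qed

lemma critNx:
  assumes xV: "x \<in> V" and cb: "d x + 1 \<le> n - 1"
    and lt: "d x + (\<Sum>v\<in>N x. phi (insert x (N x)) v) < (d x + 1) * d x"
  shows False
proof -
  define S where "S = insert x (N x)"
  have SV: "S \<subseteq> V" using xV nb_sub by (auto simp: S_def)
  have cS: "card S = d x + 1" using not_self[of x] by (simp add: S_def)
  have "(\<Sum>v\<in>S. phi S v) = phi S x + (\<Sum>v\<in>N x. phi S v)"
    unfolding S_def by (rule sum_S[OF xV])
  moreover have "phi S x = d x" using phi_x_Nx[of x "{}"] by (simp add: S_def)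
  ultimately have "(\<Sum>v\<in>S. phi S v) = d x + (\<Sum>v\<in>N x. phi S v)" by simp
  then have "(\<Sum>v\<in>S. phi S v) < card S * (card S - 1)" using lt cS by (simp add: S_def)
  then show False using surgery[OF SV] cS cb by simp
qed

lemma critNxT:
  assumes xV: "x \<in> V" and TV: "T \<subseteq> V" and Tdisj: "T \<inter> insert x (N x) = {}" and fT: "finite T"
    and cb: "d x + 1 + card T \<le> n - 1"
    and lt: "d x + (\<Sum>v\<in>N x. phi (insert x (N x) \<union> T) v) + (\<Sum>v\<in>T. phi (insert x (N x) \<union> T) v)
           < (d x + 1 + card T) * (d x + card T)"
  shows False
proof -
  define S where "S = insert x (N x) \<union> T"
  have SV: "S \<subseteq> V" using xV nb_sub TV by (auto simp: S_def)
  have "card S = card (insert x (N x)) + card T" unfolding S_def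
    by (rule card_Un_disjoint) (use fT Tdisj in auto)
  then have cS: "card S = d x + 1 + card T" using not_self[of x] by simp
  have "(\<Sum>v\<in>S. phi S v) = (\<Sum>v\<in>insert x (N x). phi S v) + (\<Sum>v\<in>T. phi S v)"
    unfolding S_def by (rule sum.union_disjoint) (use fT Tdisj in auto)
  also have "(\<Sum>v\<in>insert x (N x). phi S v) = phi S x + (\<Sum>v\<in>N x. phi S v)"
    by (rule sum_S[OF xV])
  finally have "(\<Sum>v\<in>S. phi S v) = phi S x + (\<Sum>v\<in>N x. phi S v) + (\<Sum>v\<in>T. phi S v)" .
  moreover have "phi S x = d x" using phi_x_Nx[of x T] by (simp add: S_def)
  ultimately have "(\<Sum>v\<in>S. phi S v) = d x + (\<Sum>v\<in>N x. phi S v) + (\<Sum>v\<in>T. phi S v)" by simp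
  then have "(\<Sum>v\<in>S. phi S v) < card S * (card S - 1)" using lt cS by (simp add: S_def)
  then show False using surgery[OF SV] cS cb by simp
qed

lemma D3a:
  assumes xV: "x \<in> V" and mx: "\<forall>v\<in>V. d v \<le> d x" and D: "d x = n - 3"
    and u0: "u0 \<in> N x" and c3: "3 \<le> card (N u0 - insert x (N x))"
  shows False
proof -
  have nn: "10 \<le> n" using n10 .
  let ?S = "insert x (N x)"
  have nv: "N v \<subseteq> {x, u0}" if v: "v \<in> N x" "v \<noteq> u0" for v
  proof
    fix b assume b: "b \<in> N v"
    show "b \<in> {x, u0}"
    proof (rule ccontr)
      assume bn: "b \<notin> {x, u0}"
      have "card (N u0 - ?S) - card {b} \<le> card (N u0 - ?S - {b})" by (rule diff_card_le_card_Diff) simp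
      then have "2 \<le> card (N u0 - ?S - {b})" using c3 by simp
      then obtain a1 a2 where a: "a1 \<in> N u0 - ?S - {b}" "a2 \<in> N u0 - ?S - {b}" "a1 \<noteq> a2"
        by (rule two_elems)
      have dist: "distinct [x, u0, v, a1, a2, b]"
        using a v u0 bn b not_self[of x] not_self[of v] by auto
      have "N x \<inter> {u0, v, a1, a2, b} \<subseteq> {u0, v, b}" using a by auto
      moreover have "n - 6 + card {u0, v, b} \<le> d x" using card3le[of u0 v b] D nn by linarith
      ultimately show False using fc[OF u0 v(1) _ _ b dist] a by blast
    qed
  qed
  have pv: "phi ?S v \<le> 2" if v: "v \<in> N x - {u0}" for v
  proof -
    have "N v \<subseteq> {x, u0}" using nv v by blast
    then have "d v \<le> card {x, u0}" by (rule card_mono[rotated]) simp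
    then have "d v \<le> 2" using card2le[of x u0] by linarith
    moreover have "N v - ?S = {}" using nv v u0 by auto
    then have "card (N v - ?S) = 0" by (simp only: card.empty)
    ultimately show ?thesis by linarith
  qed
  have pu: "phi ?S u0 \<le> 2 * d x" using phi_le[where S="?S" and v=u0] mx u0 nb_sub by fastforce
  have "(\<Sum>v\<in>N x. phi ?S v) \<le> phi ?S u0 + (d x - 1) * 2"
    by (rule sum_split_bound[OF u0 fin_nb]) (use pv in auto)
  also have "\<dots> \<le> 2 * d x + (d x - 1) * 2" using pu by simp
  finally have sb: "(\<Sum>v\<in>N x. phi ?S v) \<le> 2 * d x + (d x - 1) * 2" .
  have "7 \<le> d x" using D nn by simp
  then have "7 * d x \<le> d x * d x" by simp
  moreover have "(d x + 1) * d x = d x * d x + d x" by (simp add: algebra_simps)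
  ultimately have "d x + (2 * d x + (d x - 1) * 2) < (d x + 1) * d x" using \<open>7 \<le> d x\<close> by linarith
  then have lt: "d x + (\<Sum>v\<in>N x. phi ?S v) < (d x + 1) * d x" using sb by linarith
  have cb: "d x + 1 \<le> n - 1" using D nn by simp
  show False by (rule critNx[OF xV cb lt])
qed

lemma D3b:
  assumes xV: "x \<in> V" and mx: "\<forall>v\<in>V. d v \<le> d x" and D: "d x = n - 3"
    and u0: "u0 \<in> N x" and w1: "w1 \<in> N u0 - insert x (N x)" and w2: "w2 \<in> N u0 - insert x (N x)"
    and w12: "w1 \<noteq> w2" and all2: "\<forall>u\<in>N x. card (N u - insert x (N x)) \<le> 2"
  shows False
proof -
  have nn: "10 \<le> n" using n10 .
  let ?S = "insert x (N x)"
  have nv: "N v \<subseteq> {x, u0, w1, w2}" if v: "v \<in> N x" "v \<noteq> u0" for v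
  proof
    fix b assume b: "b \<in> N v"
    show "b \<in> {x, u0, w1, w2}"
    proof (rule ccontr)
      assume bn: "b \<notin> {x, u0, w1, w2}"
      have dist: "distinct [x, u0, v, w1, w2, b]"
        using w1 w2 w12 v u0 bn b not_self[of x] not_self[of v] by auto
      have "N x \<inter> {u0, v, w1, w2, b} \<subseteq> {u0, v, b}" using w1 w2 by auto
      moreover have "n - 6 + card {u0, v, b} \<le> d x" using card3le[of u0 v b] D nn by linarith
      ultimately show False using fc[OF u0 v(1) _ _ b dist] w1 w2 by blast
    qed
  qed
  have pv: "phi ?S v \<le> 6" if v: "v \<in> N x - {u0}" for v
  proof -
    have "N v \<subseteq> {x, u0, w1, w2}" using nv v by blast
    then have "d v \<le> card {x, u0, w1, w2}" by (rule card_mono[rotated]) simp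
    then have "d v \<le> 4" using card4le[of x u0 w1 w2] by linarith
    moreover have "N v - ?S \<subseteq> {w1, w2}" using \<open>N v \<subseteq> {x, u0, w1, w2}\<close> u0 by auto
    then have "card (N v - ?S) \<le> card {w1, w2}" by (rule card_mono[rotated]) simp
    then have "card (N v - ?S) \<le> 2" using card2le[of w1 w2] by linarith
    ultimately show ?thesis by linarith
  qed
  have pu: "phi ?S u0 \<le> d x + 2" using all2 u0 mx nb_sub by fastforce
  have "(\<Sum>v\<in>N x. phi ?S v) \<le> phi ?S u0 + (d x - 1) * 6"
    by (rule sum_split_bound[OF u0 fin_nb]) (use pv in auto)
  then have sb: "(\<Sum>v\<in>N x. phi ?S v) \<le> d x + 2 + (d x - 1) * 6" using pu by linarith
  have "7 \<le> d x" using D nn by simp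
  then have "7 * d x \<le> d x * d x" by simp
  moreover have "(d x + 1) * d x = d x * d x + d x" by (simp add: algebra_simps)
  ultimately have lt: "d x + (\<Sum>v\<in>N x. phi ?S v) < (d x + 1) * d x" using sb \<open>7 \<le> d x\<close> by linarith
  have cb: "d x + 1 \<le> n - 1" using D nn by simp
  show False by (rule critNx[OF xV cb lt])
qed

lemma D3c:
  assumes xV: "x \<in> V" and mx: "\<forall>v\<in>V. d v \<le> d x" and D: "d x = n - 3"
    and wV: "w \<in> V" and wS: "w \<notin> insert x (N x)" and allw: "\<forall>u\<in>N x. N u - insert x (N x) \<subseteq> {w}"
  shows False
proof -
  have nn: "10 \<le> n" using n10 .
  let ?S = "insert x (N x) \<union> {w}"
  have pv: "phi ?S v \<le> d x" if v: "v \<in> N x" for v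
  proof -
    have "N v - ?S = {}" using allw v by auto
    then have "card (N v - ?S) = 0" by (simp only: card.empty)
    moreover have "d v \<le> d x" using mx v nb_sub by auto
    ultimately show ?thesis by linarith
  qed
  have sb: "(\<Sum>v\<in>N x. phi ?S v) \<le> d x * d x"
    using sum_bounded_above[of "N x" "phi ?S" "d x"] pv by simp
  have "d w \<le> d x" using mx wV by blast
  then have "phi ?S w \<le> 2 * d x" using phi_le[where S="?S" and v=w] by linarith
  then have pw: "(\<Sum>v\<in>{w}. phi ?S v) \<le> 2 * d x" by simp
  have "(d x + 1 + card {w}) * (d x + card {w}) = d x * d x + 3 * d x + 2" by (simp add: algebra_simps)
  then have lt: "d x + (\<Sum>v\<in>N x. phi ?S v) + (\<Sum>v\<in>{w}. phi ?S v) < (d x + 1 + card {w}) * (d x + card {w})"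
    using sb pw by linarith
  have cb: "d x + 1 + card {w} \<le> n - 1" using D nn by simp
  show False by (rule critNxT[OF xV _ _ _ cb lt]) (use wV wS in auto)
qed

lemma D3d:
  assumes xV: "x \<in> V" and mx: "\<forall>v\<in>V. d v \<le> d x" and D: "d x = n - 3"
    and all1: "\<forall>u\<in>N x. card (N u - insert x (N x)) \<le> 1"
    and u1: "u1 \<in> N x" and w: "w \<in> N u1 - insert x (N x)"
    and u2: "u2 \<in> N x" and w': "w' \<in> N u2 - insert x (N x)" and ww: "w \<noteq> w'"
  shows False
proof -
  have nn: "10 \<le> n" using n10 .
  let ?S = "insert x (N x)"
  have uniq: "a = b" if "u \<in> N x" "a \<in> N u - ?S" "b \<in> N u - ?S" for u a b
    using all1 that card_le_Suc0_iff_eq[of "N u - ?S"] by auto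
  have dv: "d v \<le> 3" if v: "v \<in> N x" and wv: "wv \<in> N v - ?S" for v wv
  proof -
    obtain u wu where u: "u \<in> N x" and wu: "wu \<in> N u - ?S" and wne: "wu \<noteq> wv"
      using u1 w u2 w' ww by (cases "wv = w") auto
    have uv: "u \<noteq> v" using uniq[OF v wv] wu wne by blast
    have "N v \<subseteq> {x, u, wv}"
    proof
      fix c assume c: "c \<in> N v"
      show "c \<in> {x, u, wv}"
      proof (rule ccontr)
        assume cn: "c \<notin> {x, u, wv}"
        have cN: "c \<in> N x" using uniq[OF v wv, of c] c cn by auto
        have dist: "distinct [x, v, u, wv, c, wu]"
          using v u wv wu wne uv cN cn c not_self[of x] not_self[of v] by auto
        have "N x \<inter> {v, u, wv, c, wu} \<subseteq> {v, u, c}" using wv wu by auto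
        moreover have "n - 6 + card {v, u, c} \<le> d x" using card3le[of v u c] D nn by linarith
        ultimately show False using fc[OF v u _ _ _ dist] wv c wu by blast
      qed
    qed
    then have "d v \<le> card {x, u, wv}" by (rule card_mono[rotated]) simp
    then show ?thesis using card3le[of x u wv] by linarith
  qed
  have "7 \<le> d x" using D nn by simp
  have pv: "phi ?S v \<le> d x" if v: "v \<in> N x" for v
  proof (cases "N v - ?S = {}")
    case True
    then have "card (N v - ?S) = 0" by (simp only: card.empty)
    moreover have "d v \<le> d x" using mx v nb_sub by auto
    ultimately show ?thesis by linarith
  next
    case False
    then obtain wv where "wv \<in> N v - ?S" by blast
    then have "d v \<le> 3" using dv v by blast
    moreover have "card (N v - ?S) \<le> 1" using all1 v by blast
    ultimately show ?thesis using \<open>7 \<le> d x\<close> by linarith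
  qed
  have pu1: "phi ?S u1 \<le> 4" using dv[OF u1 w] all1 u1 by fastforce
  have "(\<Sum>v\<in>N x. phi ?S v) \<le> phi ?S u1 + (d x - 1) * d x"
    by (rule sum_split_bound[OF u1 fin_nb]) (use pv in auto)
  then have sb: "(\<Sum>v\<in>N x. phi ?S v) \<le> 4 + (d x - 1) * d x" using pu1 by linarith
  have "(d x - 1) * d x = d x * d x - d x" by (simp add: diff_mult_distrib)
  moreover have "(d x + 1) * d x = d x * d x + d x" by (simp add: algebra_simps)
  moreover have "7 * d x \<le> d x * d x" using \<open>7 \<le> d x\<close> by simp
  ultimately have lt: "d x + (\<Sum>v\<in>N x. phi ?S v) < (d x + 1) * d x" using sb \<open>7 \<le> d x\<close> by linarith
  have cb: "d x + 1 \<le> n - 1" using D nn by simp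
  show False by (rule critNx[OF xV cb lt])
qed

lemma caseD3:
  assumes xV: "x \<in> V" and mx: "\<forall>v\<in>V. d v \<le> d x" and D: "d x = n - 3"
    and u1: "u1 \<in> N x" and w: "w \<in> N u1" and wS: "w \<notin> insert x (N x)"
  shows False
proof -
  let ?S = "insert x (N x)"
  show False
  proof (cases "\<exists>u0\<in>N x. 3 \<le> card (N u0 - ?S)")
    case True
    then obtain u0 where "u0 \<in> N x" "3 \<le> card (N u0 - ?S)" by blast
    then show False using D3a[OF xV mx D] by blast
  next
    case na: False
    then have all2: "\<forall>u\<in>N x. card (N u - ?S) \<le> 2" by auto
    show False
    proof (cases "\<exists>u0\<in>N x. 2 \<le> card (N u0 - ?S)")
      case True
      then obtain u0 where u0: "u0 \<in> N x" "2 \<le> card (N u0 - ?S)" by blast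
      then obtain w1 w2 where "w1 \<in> N u0 - ?S" "w2 \<in> N u0 - ?S" "w1 \<noteq> w2" using two_elems by blast
      then show False using D3b[OF xV mx D u0(1) _ _ _ all2] by blast
    next
      case nb: False
      then have all1: "\<forall>u\<in>N x. card (N u - ?S) \<le> 1" by auto
      show False
      proof (cases "\<forall>u\<in>N x. N u - ?S \<subseteq> {w}")
        case True
        have "w \<in> V" using w nb_sub by blast
        then show False using D3c[OF xV mx D _ wS True] by blast
      next
        case False
        then obtain u2 w' where "u2 \<in> N x" "w' \<in> N u2 - ?S" "w' \<noteq> w" by blast
        then show False using D3d[OF xV mx D all1 u1 _ _ _] w wS by blast
      qed
    qed
  qed
qed

lemma D4crit:
  assumes xV: "x \<in> V" and D: "d x = n - 4" and mx: "\<forall>v\<in>V. d v \<le> d x"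
    and w1: "w1 \<in> V - insert x (N x)" and w2: "w2 \<in> V - insert x (N x)" and w12: "w1 \<noteq> w2"
    and sb: "(\<Sum>v\<in>N x. phi (insert x (N x) \<union> {w1, w2}) v) + phi (insert x (N x) \<union> {w1, w2}) w1
             + phi (insert x (N x) \<union> {w1, w2}) w2 \<le> d x * d x + 4 * d x + 5"
  shows False
proof -
  have nn: "10 \<le> n" using n10 .
  let ?S = "insert x (N x) \<union> {w1, w2}"
  have "(\<Sum>v\<in>{w1, w2}. phi ?S v) = phi ?S w1 + phi ?S w2" using w12 by simp
  moreover have "(d x + 1 + card {w1, w2}) * (d x + card {w1, w2}) = d x * d x + 5 * d x + 6"
    using w12 by (simp add: algebra_simps)
  ultimately have lt: "d x + (\<Sum>v\<in>N x. phi ?S v) + (\<Sum>v\<in>{w1, w2}. phi ?S v)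
     < (d x + 1 + card {w1, w2}) * (d x + card {w1, w2})" using sb by linarith
  have cb: "d x + 1 + card {w1, w2} \<le> n - 1" using D nn w12 by simp
  show False by (rule critNxT[OF xV _ _ _ cb lt]) (use w1 w2 in auto)
qed

lemma phi_w_le: assumes "w \<in> V" and "\<forall>v\<in>V. d v \<le> d x" shows "phi S w \<le> 2 * d x"
proof -
  have "d w \<le> d x" using assms by blast
  then show ?thesis using phi_le[where S=S and v=w] by linarith
qed

lemma phi_mono_S: "S \<subseteq> S' \<Longrightarrow> phi S' v \<le> phi S v"
proof -
  assume "S \<subseteq> S'"
  then have "card (N v - S') \<le> card (N v - S)" by (intro card_mono) auto
  then show ?thesis by linarith
qed

lemma D4b:
  assumes xV: "x \<in> V" and mx: "\<forall>v\<in>V. d v \<le> d x" and D: "d x = n - 4"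
    and u0: "u0 \<in> N x" and w1: "w1 \<in> N u0 - insert x (N x)" and w2: "w2 \<in> N u0 - insert x (N x)"
    and w12: "w1 \<noteq> w2" and all2: "\<forall>u\<in>N x. card (N u - insert x (N x)) \<le> 2"
  shows False
proof -
  have nn: "10 \<le> n" using n10 .
  let ?R = "insert x (N x)"
  let ?S = "insert x (N x) \<union> {w1, w2}"
  have wn: "N v - ?R \<subseteq> {w1, w2}" if v: "v \<in> N x" for v
  proof
    fix b assume b: "b \<in> N v - ?R"
    show "b \<in> {w1, w2}"
    proof (rule ccontr)
      assume bn: "b \<notin> {w1, w2}"
      show False
      proof (cases "v = u0")
        case True
        have "{w1, w2, b} \<subseteq> N u0 - ?R" using w1 w2 b True by blast
        then have "card {w1, w2, b} \<le> card (N u0 - ?R)" by (rule card_mono[rotated]) simp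
        moreover have "card {w1, w2, b} = 3" using w12 bn by (auto simp: card_insert_if)
        ultimately show False using all2 u0 by fastforce
      next
        case False
        have dist: "distinct [x, u0, v, w1, w2, b]"
          using w1 w2 w12 v u0 bn b False not_self[of x] by auto
        have "N x \<inter> {u0, v, w1, w2, b} \<subseteq> {u0, v}" using w1 w2 b by auto
        moreover have "n - 6 + card {u0, v} \<le> d x" using card2le[of u0 v] D nn by linarith
        ultimately show False using fc[OF u0 v _ _ _ dist] w1 w2 b by blast
      qed
    qed
  qed
  have pv: "phi ?S v \<le> d x" if v: "v \<in> N x" for v
  proof -
    have "N v - ?S = {}" using wn[OF v] by auto
    then have "card (N v - ?S) = 0" by (simp only: card.empty)
    moreover have "d v \<le> d x" using mx v nb_sub by auto
    ultimately show ?thesis by linarith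
  qed
  have sb: "(\<Sum>v\<in>N x. phi ?S v) \<le> d x * d x"
    using sum_bounded_above[of "N x" "phi ?S" "d x"] pv by simp
  have w1V: "w1 \<in> V - ?R" "w2 \<in> V - ?R" using w1 w2 nb_sub by auto
  have "phi ?S w1 \<le> 2 * d x" "phi ?S w2 \<le> 2 * d x" using phi_w_le w1V mx by auto
  then show False using D4crit[OF xV D mx w1V w12] sb by linarith
qed

lemma part_deg:
  assumes u: "u \<in> N x"
  shows "d u = 1 + card (N u \<inter> N x) + card (N u - insert x (N x))"
proof -
  have xu: "x \<in> N u" using nb_sym[OF u] .
  have eq: "N u = insert x ((N u \<inter> N x) \<union> (N u - insert x (N x)))" using xu by blast
  have "x \<notin> (N u \<inter> N x) \<union> (N u - insert x (N x))" using not_self[of x] by blast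
  then have "card (N u) = Suc (card ((N u \<inter> N x) \<union> (N u - insert x (N x))))"
    by (subst eq) (simp add: card_insert_disjoint)
  moreover have "card ((N u \<inter> N x) \<union> (N u - insert x (N x))) = card (N u \<inter> N x) + card (N u - insert x (N x))"
    by (rule card_Un_disjoint) auto
  ultimately show ?thesis by simp
qed

lemma D4a:
  assumes xV: "x \<in> V" and mx: "\<forall>v\<in>V. d v \<le> d x" and D: "d x = n - 4"
    and u0: "u0 \<in> N x" and c3: "3 \<le> card (N u0 - insert x (N x))"
  shows False
proof -
  have nn: "10 \<le> n" using n10 .
  let ?R = "insert x (N x)"
  have nv: "N v - ?R = {}" if v: "v \<in> N x" "v \<noteq> u0" for v
  proof (rule ccontr)
    assume "N v - ?R \<noteq> {}"
    then obtain b where b: "b \<in> N v - ?R" by blast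
    have "card (N u0 - ?R) - card {b} \<le> card (N u0 - ?R - {b})" by (rule diff_card_le_card_Diff) simp
    then have "2 \<le> card (N u0 - ?R - {b})" using c3 by simp
    then obtain a1 a2 where a: "a1 \<in> N u0 - ?R - {b}" "a2 \<in> N u0 - ?R - {b}" "a1 \<noteq> a2"
      by (rule two_elems)
    have dist: "distinct [x, u0, v, a1, a2, b]"
      using a v u0 b not_self[of x] by auto
    have "N x \<inter> {u0, v, a1, a2, b} \<subseteq> {u0, v}" using a b by auto
    moreover have "n - 6 + card {u0, v} \<le> d x" using card2le[of u0 v] D nn by linarith
    ultimately show False using fc[OF u0 v(1) _ _ _ dist] a b by blast
  qed
  define cI where "cI = card (N u0 \<inter> N x)"
  define cW where "cW = card (N u0 - ?R)"
  have hd: "d u0 = 1 + cI + cW" using part_deg[OF u0] by (simp add: cI_def cW_def)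
  define K where "K = {v\<in>N x - {u0}. v \<notin> N u0}"
  have hK: "card K + cI = d x - 1"
  proof -
    have e: "N x - {u0} = K \<union> (N u0 \<inter> N x)" using not_self[of u0] by (auto simp: K_def)
    have "card (K \<union> (N u0 \<inter> N x)) = card K + card (N u0 \<inter> N x)"
      by (rule card_Un_disjoint) (auto simp: K_def)
    then have "card (N x - {u0}) = card K + card (N u0 \<inter> N x)" by (simp only: e)
    then show ?thesis using u0 by (simp add: cI_def)
  qed
  have dK: "d v + (if v \<in> K then 1 else 0) \<le> d x" if v: "v \<in> N x - {u0}" for v
  proof (cases "v \<in> K")
    case False then show ?thesis using mx v nb_sub by auto
  next
    case True
    have "N v \<subseteq> insert x (N x - {v, u0})"
    proof
      fix c assume c: "c \<in> N v"
      have "c \<in> ?R" using nv[of v] v c by blast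
      moreover have "c \<noteq> v" using c not_self by blast
      moreover have "c \<noteq> u0" using c True nb_sym by (auto simp: K_def)
      ultimately show "c \<in> insert x (N x - {v, u0})" by blast
    qed
    then have "d v \<le> card (insert x (N x - {v, u0}))" by (rule card_mono[rotated]) simp
    also have "\<dots> \<le> Suc (card (N x - {v, u0}))" by (rule card_ins_le)
    also have "card (N x - {v, u0}) = d x - 2" using v u0 by (simp add: card_Diff_subset)
    finally have "d v \<le> Suc (d x - 2)" .
    then show ?thesis using True D nn by simp
  qed
  have "(\<Sum>v\<in>N x - {u0}. d v + (if v \<in> K then 1 else 0)) \<le> card (N x - {u0}) * d x"
    using sum_bounded_above[of "N x - {u0}" _ "d x"] dK by simp
  moreover have "(\<Sum>v\<in>N x - {u0}. d v + (if v \<in> K then 1 else 0)) = (\<Sum>v\<in>N x - {u0}. d v) + card K"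
  proof -
    have "card K = (\<Sum>v\<in>N x - {u0}. if v \<in> K then 1 else 0)"
      unfolding K_def using card_filter_sum[of "N x - {u0}" "\<lambda>v. v \<notin> N u0"] by (simp add: K_def)
    then show ?thesis by (simp add: sum.distrib)
  qed
  moreover have "card (N x - {u0}) = d x - 1" using u0 by simp
  ultimately have s1: "(\<Sum>v\<in>N x - {u0}. d v) + card K \<le> (d x - 1) * d x" by simp
  obtain w1 w2 where w: "w1 \<in> N u0 - ?R" "w2 \<in> N u0 - ?R" "w1 \<noteq> w2"
  proof -
    have "2 \<le> card (N u0 - ?R)" using c3 by simp
    then show ?thesis using that by (rule two_elems)
  qed
  let ?T = "insert x (N x) \<union> {w1, w2}"
  have pv: "phi ?T v \<le> d v + card (N v - ?R)" for v using phi_mono_S[of ?R ?T v] by auto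
  have "(\<Sum>v\<in>N x. phi ?T v) \<le> (\<Sum>v\<in>N x. d v + card (N v - ?R))" by (rule sum_mono) (rule pv)
  also have "\<dots> = (d u0 + card (N u0 - ?R)) + (\<Sum>v\<in>N x - {u0}. d v + card (N v - ?R))"
    by (rule sum.remove[OF fin_nb u0])
  also have "(\<Sum>v\<in>N x - {u0}. d v + card (N v - ?R)) = (\<Sum>v\<in>N x - {u0}. d v)"
    by (rule sum.cong[OF refl]) (use nv in auto)
  finally have s2: "(\<Sum>v\<in>N x. phi ?T v) \<le> d u0 + cW + (\<Sum>v\<in>N x - {u0}. d v)" by (simp add: cW_def)
  have "1 \<le> d x" using D nn by simp
  then have m: "(d x - 1) * d x + d x = d x * d x" by (simp add: algebra_simps diff_mult_distrib)
  have du: "d u0 \<le> d x" using mx u0 nb_sub by auto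
  have sN: "(\<Sum>v\<in>N x. phi ?T v) \<le> d x * d x" using s1 s2 hd hK m du by linarith
  have wV: "w1 \<in> V - ?R" "w2 \<in> V - ?R" using w nb_sub by auto
  have "phi ?T w1 \<le> 2 * d x" "phi ?T w2 \<le> 2 * d x" using phi_w_le wV mx by auto
  then show False using D4crit[OF xV D mx wV w(3)] sN by linarith
qed

lemma D4c:
  assumes xV: "x \<in> V" and mx: "\<forall>v\<in>V. d v \<le> d x" and D: "d x = n - 4"
    and all1: "\<forall>u\<in>N x. card (N u - insert x (N x)) \<le> 1"
    and nf: "\<forall>u\<in>N x. N u - insert x (N x) \<noteq> {} \<longrightarrow> d u \<le> d x - 1"
    and w1: "w1 \<in> V - insert x (N x)" and w2: "w2 \<in> V - insert x (N x)" and w12: "w1 \<noteq> w2"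
  shows False
proof -
  let ?R = "insert x (N x)"
  let ?T = "insert x (N x) \<union> {w1, w2}"
  have pv: "phi ?T v \<le> d x" if v: "v \<in> N x" for v
  proof -
    have a: "phi ?T v \<le> d v + card (N v - ?R)" using phi_mono_S[of ?R ?T v] by auto
    show ?thesis
    proof (cases "N v - ?R = {}")
      case True
      then have "card (N v - ?R) = 0" by (simp only: card.empty)
      moreover have "d v \<le> d x" using mx v nb_sub by auto
      ultimately show ?thesis using a by linarith
    next
      case False
      then have "d v \<le> d x - 1" using nf v by blast
      moreover have "card (N v - ?R) \<le> 1" using all1 v by blast
      moreover have "1 \<le> d x" using nb_sym[OF v] card_gt_0_iff mx v nb_sub
        by (metis One_nat_def Suc_leI empty_iff fin_nb le_trans)
      ultimately show ?thesis using a by linarith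
    qed
  qed
  have sN: "(\<Sum>v\<in>N x. phi ?T v) \<le> d x * d x"
    using sum_bounded_above[of "N x" "phi ?T" "d x"] pv by simp
  have "phi ?T w1 \<le> 2 * d x" "phi ?T w2 \<le> 2 * d x" using phi_w_le w1 w2 mx by auto
  then show False using D4crit[OF xV D mx w1 w2 w12] sN by linarith
qed

lemma D4d:
  assumes xV: "x \<in> V" and mx: "\<forall>v\<in>V. d v \<le> d x" and D: "d x = n - 4"
    and all1: "\<forall>u\<in>N x. card (N u - insert x (N x)) \<le> 1"
    and u: "u \<in> N x" and wu: "wu \<in> N u - insert x (N x)" and du: "d u = d x"
    and w2: "w2 \<in> V - insert x (N x)" and w12: "wu \<noteq> w2"
  shows False
proof -
  have nn: "10 \<le> n" using n10 .
  let ?R = "insert x (N x)"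
  let ?T = "insert x (N x) \<union> {wu, w2}"
  have uniq: "a = b" if "a \<in> N u - ?R" "b \<in> N u - ?R" for a b
    using all1 u that card_le_Suc0_iff_eq[of "N u - ?R"] by auto
  have cw: "card (N wu - ?R) \<le> 1"
  proof (rule ccontr)
    assume "\<not> ?thesis"
    then have "2 \<le> card (N wu - ?R)" by simp
    then obtain c1 c2 where c: "c1 \<in> N wu - ?R" "c2 \<in> N wu - ?R" "c1 \<noteq> c2" by (rule two_elems)
    have cW: "card (N u - ?R) = 1"
    proof -
      have "N u - ?R \<noteq> {}" using wu by blast
      then have "card (N u - ?R) \<noteq> 0" by simp
      then show ?thesis using all1 u by fastforce
    qed
    have "d u = 1 + card (N u \<inter> N x) + 1" using part_deg[OF u] cW by simp
    then have "card (N u \<inter> N x) < card (N x - {u})" using du u D nn by simp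
    then have "\<not> (N x - {u} \<subseteq> N u \<inter> N x)" using card_mono[of "N u \<inter> N x" "N x - {u}"] by auto
    then obtain ub where ub: "ub \<in> N x" "ub \<noteq> u" "ub \<notin> N u" by blast
    have xu: "x \<in> N u" using nb_sym[OF u] .
    have wuN: "wu \<in> N u" using wu by blast
    have c1u: "c1 \<notin> N u" "c2 \<notin> N u"
    proof -
      show "c1 \<notin> N u"
      proof
        assume "c1 \<in> N u" then have "c1 = wu" using uniq wu c by blast
        then show False using c not_self by blast
      qed
      show "c2 \<notin> N u"
      proof
        assume "c2 \<in> N u" then have "c2 = wu" using uniq wu c by blast
        then show False using c not_self by blast
      qed
    qed
    have dist: "distinct [u, wu, x, c1, c2, ub]"
      using u wu c ub not_self[of x] not_self[of wu] by auto
    have "N u \<inter> {wu, x, c1, c2, ub} \<subseteq> {wu, x}" using c1u ub by auto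
    moreover have "n - 6 + card {wu, x} \<le> d u" using card2le[of wu x] du D nn by linarith
    ultimately show False using fc[OF wuN xu _ _ ub(1) dist] c by blast
  qed
  have pv: "phi ?T v \<le> d x + 1" if v: "v \<in> N x" for v
  proof -
    have "phi ?T v \<le> d v + card (N v - ?R)" using phi_mono_S[of ?R ?T v] by auto
    moreover have "d v \<le> d x" using mx v nb_sub by auto
    moreover have "card (N v - ?R) \<le> 1" using all1 v by blast
    ultimately show ?thesis by linarith
  qed
  have sN: "(\<Sum>v\<in>N x. phi ?T v) \<le> d x * (d x + 1)"
    using sum_bounded_above[of "N x" "phi ?T" "d x + 1"] pv by simp
  have wV: "wu \<in> V - ?R" using wu nb_sub by auto
  have "phi ?T wu \<le> d wu + card (N wu - ?R)" using phi_mono_S[of ?R ?T wu] by auto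
  then have p1: "phi ?T wu \<le> d x + 1" using cw mx wV by fastforce
  have p2: "phi ?T w2 \<le> 2 * d x" using phi_w_le w2 mx by auto
  have "d x * (d x + 1) = d x * d x + d x" by (simp add: algebra_simps)
  then show False using D4crit[OF xV D mx wV w2 w12] sN p1 p2 by linarith
qed

lemma caseD4:
  assumes xV: "x \<in> V" and mx: "\<forall>v\<in>V. d v \<le> d x" and D: "d x = n - 4"
  shows False
proof -
  have nn: "10 \<le> n" using n10 .
  let ?R = "insert x (N x)"
  have "card ?R = d x + 1" using not_self[of x] by simp
  moreover have "?R \<subseteq> V" using xV nb_sub by auto
  ultimately have "card (V - ?R) = card V - (d x + 1)" using finV by (simp add: card_Diff_subset)
  then have "2 \<le> card (V - ?R)" using bigV D nn by simp
  then obtain w1 w2 where ww: "w1 \<in> V - ?R" "w2 \<in> V - ?R" "w1 \<noteq> w2" by (rule two_elems)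
  show False
  proof (cases "\<exists>u0\<in>N x. 3 \<le> card (N u0 - ?R)")
    case True
    then obtain u0 where "u0 \<in> N x" "3 \<le> card (N u0 - ?R)" by blast
    then show False using D4a[OF xV mx D] by blast
  next
    case na: False
    then have all2: "\<forall>u\<in>N x. card (N u - ?R) \<le> 2" by auto
    show False
    proof (cases "\<exists>u0\<in>N x. 2 \<le> card (N u0 - ?R)")
      case True
      then obtain u0 where u0: "u0 \<in> N x" "2 \<le> card (N u0 - ?R)" by blast
      then obtain a1 a2 where "a1 \<in> N u0 - ?R" "a2 \<in> N u0 - ?R" "a1 \<noteq> a2" using two_elems by blast
      then show False using D4b[OF xV mx D u0(1) _ _ _ all2] by blast
    next
      case nb: False
      then have all1: "\<forall>u\<in>N x. card (N u - ?R) \<le> 1" by auto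
      show False
      proof (cases "\<exists>u\<in>N x. N u - ?R \<noteq> {} \<and> \<not> d u \<le> d x - 1")
        case True
        then obtain u wu where u: "u \<in> N x" "wu \<in> N u - ?R" "\<not> d u \<le> d x - 1" by blast
        have du: "d u = d x" using u mx nb_sub by fastforce
        obtain w2 where w2: "w2 \<in> V - ?R" "wu \<noteq> w2" using ww by blast
        show False using D4d[OF xV mx D all1 u(1,2) du w2] .
      next
        case False
        then have "\<forall>u\<in>N x. N u - ?R \<noteq> {} \<longrightarrow> d u \<le> d x - 1" by blast
        then show False using D4c[OF xV mx D all1 _ ww] by blast
      qed
    qed
  qed
qed

lemma sum_Q_bound:
  assumes fS: "finite S" and b: "\<And>v. v \<in> S \<Longrightarrow> f v \<le> (4::nat) + (if v \<in> Q then 4 else 0)"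
    and fQ: "finite Q" and cQ: "card Q \<le> 3"
  shows "sum f S \<le> 4 * card S + 12"
proof -
  have "sum f S \<le> (\<Sum>v\<in>S. 4 + (if v \<in> Q then 4 else 0))" by (rule sum_mono) (rule b)
  also have "\<dots> = (\<Sum>v\<in>S. 4) + (\<Sum>v\<in>S. 4 * (if v \<in> Q then 1 else 0))"
    by (simp only: sum.distrib) (rule arg_cong2[where f="(+)"], rule refl, rule sum.cong, auto)
  also have "\<dots> = 4 * card S + 4 * card {v\<in>S. v \<in> Q}"
    by (simp only: card_filter_sum[OF fS] sum_distrib_left[symmetric]) simp
  also have "card {v\<in>S. v \<in> Q} \<le> card Q" by (rule card_mono[OF fQ]) auto
  finally show ?thesis using cQ by linarith
qed

lemma caseBig:
  assumes xV: "x \<in> V" and D: "n - 1 \<le> d x"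
  shows False
proof -
  have nn: "10 \<le> n" using n10 .
  show False
  proof (cases "\<forall>u\<in>N x. d u \<le> 3")
    case True
    obtain S where S: "S \<subseteq> N x" "card S = n - 1" "finite S" by (rule obtain_subset_with_card_n[OF D])
    have SV: "S \<subseteq> V" using S nb_sub by blast
    have "(\<Sum>v\<in>S. phi S v) \<le> card S * 6"
    proof -
      have "phi S v \<le> 6" if v: "v \<in> S" for v
      proof -
        have "d v \<le> 3" using True S(1) v by blast
        then show ?thesis using phi_le[where S=S and v=v] by linarith
      qed
      then show ?thesis using sum_bounded_above[of S "phi S" 6] by simp
    qed
    moreover have "(n - 1) * 6 < (n - 1) * (n - 1 - 1)" using nn by simp
    moreover have "card S * (card S - 1) = (n - 1) * (n - 1 - 1)" "card S * 6 = (n - 1) * 6" using S(2) by simp_all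
    ultimately have "(\<Sum>v\<in>S. phi S v) < card S * (card S - 1)" by linarith
    then show False using surgery[OF SV] S by simp
  next
    case False
    then obtain u0 where u0': "u0 \<in> N x" "\<not> d u0 \<le> 3" by blast
    then have u0: "u0 \<in> N x" "4 \<le> d u0" by auto
    have claim: "v \<in> N u0 \<and> b \<in> N u0 \<and> d u0 = 4" if v: "v \<in> N x" "v \<noteq> u0" and b: "b \<in> N v" "b \<notin> {x, u0}" for v b
    proof -
      have cA: "card (N u0 - {x, v, b}) \<le> 1"
      proof (rule ccontr)
        assume "\<not> ?thesis"
        then have "2 \<le> card (N u0 - {x, v, b})" by simp
        then obtain a1 a2 where a: "a1 \<in> N u0 - {x, v, b}" "a2 \<in> N u0 - {x, v, b}" "a1 \<noteq> a2" by (rule two_elems)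
        have dist: "distinct [x, u0, v, a1, a2, b]"
          using a v u0 b not_self[of x] not_self[of v] not_self[of u0] by auto
        have "N x \<inter> {u0, v, a1, a2, b} \<subseteq> {u0, v, a1, a2, b}" by blast
        moreover have "n - 6 + card {u0, v, a1, a2, b} \<le> d x" using card5le[of u0 v a1 a2 b] D nn by linarith
        ultimately show False using fc[OF u0(1) v(1) _ _ b(1) dist] a by blast
      qed
      have "d u0 \<le> card (N u0 - {x, v, b}) + card {x, v, b}"
        by (rule card_diff_ge) auto
      moreover have "card (N u0 \<inter> {x, v, b}) \<ge> 3"
      proof -
        have "d u0 \<le> card (N u0 - {x, v, b}) + card (N u0 \<inter> {x, v, b})"
          by (rule card_diff_ge) auto
        then show ?thesis using cA u0 by linarith
      qed
      moreover have "N u0 \<inter> {x, v, b} = {x, v, b}"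
      proof (rule ccontr)
        assume ne: "N u0 \<inter> {x, v, b} \<noteq> {x, v, b}"
        have "N u0 \<inter> {x, v, b} \<subset> {x, v, b}" using ne by blast
        then have "card (N u0 \<inter> {x, v, b}) < card {x, v, b}"
          using psubset_card_mono[of "{x, v, b}" "N u0 \<inter> {x, v, b}"] by simp
        then show False using card3le[of x v b] \<open>card (N u0 \<inter> {x, v, b}) \<ge> 3\<close> by linarith
      qed
      ultimately show ?thesis using cA card3le[of x v b] u0 by auto
    qed
    define Q where "Q = {v\<in>N x - {u0}. 3 \<le> d v}"
    have fQ: "finite Q" by (simp add: Q_def)
    have QQ: "v \<in> N u0 \<and> d u0 = 4" if v: "v \<in> Q" for v
    proof -
      have v1: "v \<in> N x" "v \<noteq> u0" "3 \<le> d v" using v by (auto simp: Q_def)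
      have "\<not> N v \<subseteq> {x, u0}"
      proof
        assume "N v \<subseteq> {x, u0}"
        then have "d v \<le> card {x, u0}" by (rule card_mono[rotated]) simp
        then show False using card2le[of x u0] v1 by linarith
      qed
      then obtain b where "b \<in> N v" "b \<notin> {x, u0}" by blast
      then show ?thesis using claim v1 by blast
    qed
    have QN: "Q \<subseteq> N u0 - {x}"
    proof
      fix v assume v: "v \<in> Q"
      then have "v \<in> N x" by (auto simp: Q_def)
      then show "v \<in> N u0 - {x}" using QQ[OF v] not_self[of x] by auto
    qed
    have cQ: "card Q \<le> 3"
    proof (cases "Q = {}")
      case True then show ?thesis by simp
    next
      case False
      then obtain v where v: "v \<in> Q" by blast
      have "d u0 = 4" using QQ[OF v] by blast
      moreover have "x \<in> N u0" using nb_sym[OF u0(1)] .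
      ultimately have "card (N u0 - {x}) = 3" by simp
      then show ?thesis using card_mono[OF _ QN] by simp
    qed
    have dv: "d v \<le> 2 + (if v \<in> Q then 2 else 0)" if v: "v \<in> N x - {u0}" for v
    proof (cases "v \<in> Q")
      case False
      then show ?thesis using v by (auto simp: Q_def)
    next
      case True
      then have v1: "v \<in> N x" "v \<noteq> u0" by (auto simp: Q_def)
      have "N v \<subseteq> {x, u0} \<union> (N u0 - {x, v})"
      proof
        fix b assume b: "b \<in> N v"
        show "b \<in> {x, u0} \<union> (N u0 - {x, v})"
        proof (cases "b \<in> {x, u0}")
          case True then show ?thesis by blast
        next
          case False
          then have "b \<in> N u0" using claim v1 b by blast
          moreover have "b \<noteq> v" using b not_self by blast
          ultimately show ?thesis using False by blast
        qed
      qed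
      then have "d v \<le> card ({x, u0} \<union> (N u0 - {x, v}))" by (rule card_mono[rotated]) simp
      also have "\<dots> \<le> card {x, u0} + card (N u0 - {x, v})" by (rule card_Un_le)
      also have "card (N u0 - {x, v}) = 2"
      proof -
        have "v \<in> N u0" "d u0 = 4" using QQ True by auto
        moreover have "x \<in> N u0" using nb_sym[OF u0(1)] .
        moreover have "x \<noteq> v" using v1 not_self[of x] by blast
        ultimately show ?thesis using v1 by (simp add: card_Diff_subset)
      qed
      finally show ?thesis using card2le[of x u0] True by simp
    qed
    have pv: "phi S v \<le> 4 + (if v \<in> Q then 4 else 0)" if "v \<in> N x - {u0}" for S v
      using phi_le[where S=S and v=v] dv[OF that] by (cases "v \<in> Q") auto
    show False
    proof (cases "n \<le> d x")
      case True
      have "n - 1 \<le> card (N x - {u0})" using True u0 by simp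
      then obtain S where S: "S \<subseteq> N x - {u0}" "card S = n - 1" "finite S"
        using obtain_subset_with_card_n by metis
      have SV: "S \<subseteq> V" using S nb_sub by blast
      have "(\<Sum>v\<in>S. phi S v) \<le> 4 * card S + 12"
        by (rule sum_Q_bound[OF S(3) _ fQ cQ]) (use pv S in blast)
      moreover have "4 * (n - 1) + 12 < (n - 1) * (n - 1 - 1)"
      proof -
        have e: "n - 1 - 1 = 4 + (n - 6)" using nn by simp
        have "(n - 1) * (n - 1 - 1) = (n - 1) * 4 + (n - 1) * (n - 6)"
          unfolding e by (rule add_mult_distrib2)
        moreover have "(n - 1) * (n - 6) \<ge> 9 * 4" using nn by (intro mult_le_mono) auto
        ultimately show ?thesis by linarith
      qed
      ultimately show False using surgery[OF SV] S by simp
    next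
      case False
      then have Dx: "d x = n - 1" using D by linarith
      define S where "S = insert x (N x - {u0})"
      have SV: "S \<subseteq> V" using xV nb_sub by (auto simp: S_def)
      have cS: "card S = n - 1" using not_self[of x] u0 Dx n10 by (simp add: S_def)
      have "(\<Sum>v\<in>S. phi S v) = phi S x + (\<Sum>v\<in>N x - {u0}. phi S v)"
        unfolding S_def using not_self[of x] by (simp add: sum.insert)
      moreover have "phi S x = d x + 1"
      proof -
        have "N x - S = {u0}" using u0 not_self[of x] by (auto simp: S_def)
        then show ?thesis by simp
      qed
      moreover have "(\<Sum>v\<in>N x - {u0}. phi S v) \<le> 4 * card (N x - {u0}) + 12"
        by (rule sum_Q_bound[OF _ _ fQ cQ]) (use pv in auto)
      moreover have "card (N x - {u0}) = n - 2" using u0 Dx by simp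
      moreover have "n + (4 * (n - 2) + 12) < (n - 1) * (n - 1 - 1)"
      proof -
        have "9 * (n - 1 - 1) \<le> (n - 1) * (n - 1 - 1)" using nn by (intro mult_le_mono1) simp
        then show ?thesis using nn by linarith
      qed
      moreover have "card S * (card S - 1) = (n - 1) * (n - 1 - 1)" using cS by simp
      ultimately have "(\<Sum>v\<in>S. phi S v) < card S * (card S - 1)" using Dx nn by linarith
      then show False using surgery[OF SV] cS by simp
    qed
  qed
qed

lemma main_TF:
  assumes conn: "connected_graph V E"
  shows "max_degree V E = n - 5"
proof -
  have nn: "10 \<le> n" using n10 .
  have Vne: "V \<noteq> {}" using bigV nn by auto
  have fin: "finite (degree V E ` V)" using finV by simp
  have "max_degree V E \<in> degree V E ` V" unfolding max_degree_def using fin Vne by (intro Max_in) auto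
  then obtain x where xV: "x \<in> V" and mxd: "max_degree V E = d x" by (auto simp: degree_nb)
  have mx: "\<forall>v\<in>V. d v \<le> d x"
  proof
    fix v assume "v \<in> V"
    then have "degree V E v \<le> max_degree V E" unfolding max_degree_def using fin by (intro Max_ge) auto
    then show "d v \<le> d x" using mxd by (simp add: degree_nb)
  qed
  have Wex: "\<exists>y\<in>V. y \<notin> insert x (N x)" if "d x \<le> n - 2"
  proof (rule ccontr)
    assume "\<not> ?thesis"
    then have "V \<subseteq> insert x (N x)" by blast
    then have "card V \<le> card (insert x (N x))" by (rule card_mono[rotated]) simp
    also have "\<dots> \<le> Suc (d x)" by (rule card_ins_le)
    finally show False using that bigV nn by linarith
  qed
  have edge: "\<exists>u\<in>N x. \<exists>w\<in>N u. w \<notin> insert x (N x)" if "d x \<le> n - 2"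
    using Wex[OF that] conn_edge[OF conn xV] by blast
  consider "d x \<le> n - 6" | "d x = n - 5" | "d x = n - 4" | "d x = n - 3" | "d x = n - 2" | "n - 1 \<le> d x"
    using nn by linarith
  then show ?thesis
  proof cases
    case 1 then show ?thesis using low_deg mx by (meson le_trans)
  next
    case 2 then show ?thesis using mxd by simp
  next
    case 3 then show ?thesis using caseD4[OF xV mx] by blast
  next
    case 4
    then obtain u w where "u \<in> N x" "w \<in> N u" "w \<notin> insert x (N x)" using edge by fastforce
    then show ?thesis using caseD3[OF xV mx 4] by blast
  next
    case 5
    then obtain u w where "u \<in> N x" "w \<in> N u" "w \<notin> insert x (N x)" using edge by fastforce
    then show ?thesis using caseD2[OF xV mx 5] by blast
  next
    case 6 then show ?thesis using caseBig[OF xV] by blast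
  qed
qed

end

theorem lemma3p2:
  fixes p n :: nat and V :: "'a set" and E :: "'a set set"
  assumes "10 \<le> n" and "n \<le> p"
    and "in_Ex p (Tpp_V n) (Tpp_E n) V E"
    and "connected_graph V E"
  shows "max_degree V E = n - 5"
proof -
  have sg: "simple_graph V E" and cV: "card V = p"
    and nc: "\<not> contains_copy V E (Tpp_V n) (Tpp_E n)" and cE: "card E = ex_num p (Tpp_V n) (Tpp_E n)"
    using assms(3) by (auto simp: in_Ex_def)
  interpret TF V E n
  proof
    show "simple_graph V E" by (rule sg)
    show "10 \<le> n" by (rule assms(1))
    show "\<not> contains_copy V E (Tpp_V n) (Tpp_E n)" by (rule nc)
    show "n \<le> card V" using cV assms(2) by simp
    fix E2 assume "simple_graph V E2" "\<not> contains_copy V E2 (Tpp_V n) (Tpp_E n)"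
    then show "card E2 \<le> card E" using transfer_ex[OF _ cV] cE by simp
  qed
  show ?thesis by (rule main_TF[OF assms(4)])
qed


end
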